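(* Let $M$ be a matroid, let $k\ge 0$ be an integer, and let $\mathcal{C}$ be a collection of circuits of $M$ such that, for some $J \subseteq E(M)$ with $|J|\leq k$, we have $C\cap C'=J$ for all distinct $C,C'\in\mathcal{C}$. Then, for every subcollection $\{C_1,\dotsc,C_{2^k}\}\subseteq\mathcal{C}$ of size $2^k$, there is a circuit of $M$ contained in $\left(\bigcup_{i=1}^{2^k}C_i\right)-J$. *)

theory Defs
  imports Main
begin

definition matroid :: "'a set \<Rightarrow> ('a set \<Rightarrow> bool) \<Rightarrow> bool" where
  "matroid E indep \<longleftrightarrow>
     finite E \<and>
     (\<forall>I. indep I \<longrightarrow> I \<subseteq> E) \<and>
     indep {} \<and>
     (\<forall>I J. indep J \<and> I \<subseteq> J \<longrightarrow> indep I) \<and>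
     (\<forall>I J. indep I \<and> indep J \<and> card I < card J \<longrightarrow>
        (\<exists>e\<in>J - I. indep (insert e I)))"

definition circuit :: "'a set \<Rightarrow> ('a set \<Rightarrow> bool) \<Rightarrow> 'a set \<Rightarrow> bool" where
  "circuit E indep C \<longleftrightarrow> C \<subseteq> E \<and> \<not> indep C \<and> (\<forall>D. D \<subset> C \<longrightarrow> indep D)"

end

theory Submission
  imports Defs
begin

lemma m_finite: "matroid E indep \<Longrightarrow> finite E" by (simp add: matroid_def)
lemma m_sub: "matroid E indep \<Longrightarrow> indep I \<Longrightarrow> I \<subseteq> E" by (simp add: matroid_def)
lemma m_empty: "matroid E indep \<Longrightarrow> indep {}" by (simp add: matroid_def)
lemma m_down: "matroid E indep \<Longrightarrow> indep J \<Longrightarrow> I \<subseteq> J \<Longrightarrow> indep I"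
  unfolding matroid_def by blast
lemma m_aug: "matroid E indep \<Longrightarrow> indep I \<Longrightarrow> indep J \<Longrightarrow> card I < card J \<Longrightarrow> \<exists>e\<in>J - I. indep (insert e I)"
  unfolding matroid_def by blast

lemma m_extend:
  assumes m: "matroid E indep" and X: "indep X" and Y: "indep Y"
  shows "\<exists>B. X \<subseteq> B \<and> B \<subseteq> X \<union> Y \<and> indep B \<and> card Y \<le> card B"
proof -
  have XE: "X \<subseteq> E" and YE: "Y \<subseteq> E" using m_sub[OF m X] m_sub[OF m Y] by auto
  have fin: "finite (X \<union> Y)" using XE YE m_finite[OF m] by (simp add: finite_subset)
  let ?P = "\<lambda>B. X \<subseteq> B \<and> B \<subseteq> X \<union> Y \<and> indep B"
  have bnd: "\<forall>B. ?P B \<longrightarrow> card B < Suc (card (X \<union> Y))"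
    using fin by (simp add: card_mono less_Suc_eq_le)
  have PX: "?P X" using X by simp
  have "\<exists>B. ?P B \<and> (\<forall>B'. ?P B' \<longrightarrow> card B' \<le> card B)"
    by (rule Lattices_Big.ex_has_greatest_nat[OF PX bnd])
  then obtain B where B: "?P B" and mx: "\<forall>B'. ?P B' \<longrightarrow> card B' \<le> card B"
    by blast
  have fB: "finite B" using B fin finite_subset by blast
  show ?thesis
  proof (rule ccontr)
    assume "\<not> ?thesis"
    then have "card B < card Y" using B by force
    then obtain e where e: "e \<in> Y - B" "indep (insert e B)" using m_aug[OF m _ Y] B by blast
    then have "?P (insert e B)" using B by blast
    then have "card (insert e B) \<le> card B" using mx by blast
    then show False using e fB by simp
  qed
qed

lemma m_elim:
  assumes m: "matroid E indep" and c1: "circuit E indep C1" and c2: "circuit E indep C2"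
    and ne: "C1 \<noteq> C2" and e: "e \<in> C1 \<inter> C2"
  shows "\<not> indep (C1 \<union> C2 - {e})"
proof
  assume Y: "indep (C1 \<union> C2 - {e})"
  have "C1 \<subseteq> E" "C2 \<subseteq> E" using c1 c2 unfolding circuit_def by auto
  then have fin: "finite (C1 \<union> C2)" using m_finite[OF m] by (simp add: finite_subset)
  have "\<not> C1 \<subseteq> C2"
  proof
    assume "C1 \<subseteq> C2" then have "C1 \<subset> C2" using ne by blast
    then show False using c1 c2 unfolding circuit_def by blast
  qed
  then obtain f where f: "f \<in> C1" "f \<notin> C2" by blast
  have X: "indep (C1 - {f})" using c1 f unfolding circuit_def by blast
  obtain B where B: "C1 - {f} \<subseteq> B" "B \<subseteq> (C1 - {f}) \<union> (C1 \<union> C2 - {e})" "indep B"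
    "card (C1 \<union> C2 - {e}) \<le> card B"
    using m_extend[OF m X Y] by blast
  have "f \<notin> B"
  proof
    assume "f \<in> B" then have "C1 \<subseteq> B" using B by blast
    then show False using m_down[OF m B(3)] c1 unfolding circuit_def by blast
  qed
  have "\<not> C2 \<subseteq> B" using m_down[OF m B(3)] c2 unfolding circuit_def by blast
  then obtain g where g: "g \<in> C2" "g \<notin> B" by blast
  have fg: "f \<noteq> g" using f g by blast
  have sub: "{f, g} \<subseteq> C1 \<union> C2" using f g by blast
  have c2: "card {f, g} = 2" using fg by simp
  have "B \<subseteq> C1 \<union> C2 - {f, g}" using B `f \<notin> B` g by blast
  then have "card B \<le> card (C1 \<union> C2 - {f, g})" using fin by (simp add: card_mono)
  also have "card (C1 \<union> C2 - {f, g}) = card (C1 \<union> C2) - card {f, g}"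
    using card_Diff_subset[of "{f, g}" "C1 \<union> C2"] sub by simp
  finally have "card B \<le> card (C1 \<union> C2) - 2" using c2 by simp
  moreover have "card (C1 \<union> C2 - {e}) = card (C1 \<union> C2) - 1" using fin e by simp
  moreover have "card {f,g} \<le> card (C1 \<union> C2)" using card_mono[OF fin sub] .
  ultimately show False using B(4) c2 by linarith
qed

lemma m_dep_circuit:
  assumes m: "matroid E indep"
  shows "X \<subseteq> E \<Longrightarrow> \<not> indep X \<Longrightarrow> \<exists>C. C \<subseteq> X \<and> circuit E indep C"
proof (induction "card X" arbitrary: X rule: less_induct)
  case less
  have fX: "finite X" using less.prems m m_finite finite_subset by blast
  show ?case
  proof (cases "\<forall>D. D \<subset> X \<longrightarrow> indep D")
    case True then show ?thesis using less.prems unfolding circuit_def by blast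
  next
    case False
    then obtain D where "D \<subset> X" "\<not> indep D" by blast
    moreover then have "card D < card X" using fX psubset_card_mono by blast
    ultimately show ?thesis using less.hyps[of D] less.prems by blast
  qed
qed

lemma set_aux: "C \<subseteq> U - (J - {e}) \<Longrightarrow> U \<subseteq> V - {e} \<Longrightarrow> C \<subseteq> V - J"
  by blast

lemma main_ind:
  fixes E :: "'a set"
  assumes m: "matroid E indep"
  shows "\<forall>(J::'a set) (I::'b set) (f::'b \<Rightarrow> 'a set). card J = n \<longrightarrow> finite J \<longrightarrow> indep J \<longrightarrow> finite I \<longrightarrow> 2 ^ n \<le> card I
    \<longrightarrow> (\<forall>i\<in>I. circuit E indep (f i)) \<longrightarrow> (\<forall>i\<in>I. \<forall>j\<in>I. i \<noteq> j \<longrightarrow> f i \<inter> f j \<subseteq> J)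
    \<longrightarrow> (\<exists>C. circuit E indep C \<and> C \<subseteq> (\<Union>i\<in>I. f i) - J)"
proof (induction n)
  case 0
  show ?case
  proof (intro allI impI)
    fix J :: "'a set" and I :: "'b set" and f :: "'b \<Rightarrow> 'a set"
    assume h: "card J = 0" "finite J" "finite I" "2 ^ 0 \<le> card I" "\<forall>i\<in>I. circuit E indep (f i)"
    then have "J = {}" by simp
    obtain i where "i \<in> I" using h by fastforce
    then show "\<exists>C. circuit E indep C \<and> C \<subseteq> (\<Union>i\<in>I. f i) - J" using h `J = {}` by blast
  qed
next
  case (Suc n)
  show ?case
  proof (intro allI impI)
    fix J :: "'a set" and I :: "'b set" and f :: "'b \<Rightarrow> 'a set"
    assume cJ: "card J = Suc n" and fJ: "finite J" and iJ: "indep J" and fI: "finite I"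
      and cI: "2 ^ Suc n \<le> card I" and circ: "\<forall>i\<in>I. circuit E indep (f i)"
      and dis: "\<forall>i\<in>I. \<forall>j\<in>I. i \<noteq> j \<longrightarrow> f i \<inter> f j \<subseteq> J"
    obtain e where eJ: "e \<in> J" using cJ by (metis card.empty ex_in_conv nat.distinct(1))
    define A where "A = {i\<in>I. e \<notin> f i}"
    define B where "B = {i\<in>I. e \<in> f i}"
    have AB: "A \<union> B = I" "A \<inter> B = {}" unfolding A_def B_def by auto
    have fA: "finite A" and fB: "finite B" using fI unfolding A_def B_def by auto
    have cAB: "card A + card B = card I" using AB fA fB card_Un_disjoint by metis
    obtain B1 where B1: "B1 \<subseteq> B" "card B1 = card B div 2" "finite B1"
      using obtain_subset_with_card_n[of "card B div 2" B] by auto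
    have "card B1 \<le> card (B - B1)" using B1 fB by (simp add: card_Diff_subset)
    then obtain p where p: "p ` B1 \<subseteq> B - B1" "inj_on p B1"
      using card_le_inj[of B1 "B - B1"] B1 fB by blast
    have "\<forall>i\<in>B1. \<exists>C. circuit E indep C \<and> C \<subseteq> f i \<union> f (p i) - {e}"
    proof
      fix i assume i: "i \<in> B1"
      have iB: "i \<in> B" and pB: "p i \<in> B" and ne: "i \<noteq> p i" using i p B1 by auto
      have c1: "circuit E indep (f i)" and c2: "circuit E indep (f (p i))"
        using iB pB circ unfolding B_def by auto
      have "f i \<noteq> f (p i)"
      proof
        assume "f i = f (p i)"
        then have "f i \<subseteq> J" using dis iB pB ne unfolding B_def by blast
        then show False using m_down[OF m iJ] c1 unfolding circuit_def by blast
      qed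
      moreover have "e \<in> f i \<inter> f (p i)" using iB pB unfolding B_def by auto
      ultimately have "\<not> indep (f i \<union> f (p i) - {e})" using m_elim[OF m c1 c2] by blast
      moreover have "f i \<union> f (p i) - {e} \<subseteq> E" using c1 c2 unfolding circuit_def by blast
      ultimately show "\<exists>C. circuit E indep C \<and> C \<subseteq> f i \<union> f (p i) - {e}"
        using m_dep_circuit[OF m] by blast
    qed
    then obtain g where g: "\<forall>i\<in>B1. circuit E indep (g i) \<and> g i \<subseteq> f i \<union> f (p i) - {e}"
      by metis
    define h where "h i = (if i \<in> A then f i else g i)" for i
    define I' where "I' = A \<union> B1"
    define sp where "sp i = (if i \<in> A then {i} else {i, p i})" for i
    have pB1: "\<And>i. i \<in> B1 \<Longrightarrow> p i \<in> B \<and> p i \<notin> B1" using p by auto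
    have spI: "\<And>i. i \<in> I' \<Longrightarrow> sp i \<subseteq> I" using pB1 B1 AB unfolding sp_def I'_def by auto
    have hsp: "\<And>i. i \<in> I' \<Longrightarrow> h i \<subseteq> (\<Union>j\<in>sp i. f j) \<and> e \<notin> h i"
    proof -
      fix i assume i: "i \<in> I'"
      show "h i \<subseteq> (\<Union>j\<in>sp i. f j) \<and> e \<notin> h i"
      proof (cases "i \<in> A")
        case True then show ?thesis unfolding h_def sp_def A_def by auto
      next
        case False
        then have "i \<in> B1" using i I'_def by auto
        then show ?thesis using False g unfolding h_def sp_def by auto
      qed
    qed
    have spd: "\<And>i j. i \<in> I' \<Longrightarrow> j \<in> I' \<Longrightarrow> i \<noteq> j \<Longrightarrow> sp i \<inter> sp j = {}"
    proof -
      fix i j assume ij: "i \<in> I'" "j \<in> I'" "i \<noteq> j"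
      have AB1: "A \<inter> B1 = {}" using AB B1 by blast
      show "sp i \<inter> sp j = {}"
        using ij pB1 AB B1(1) AB1 p(2) unfolding sp_def I'_def inj_on_def
        by (cases "i \<in> A"; cases "j \<in> A") auto
    qed
    have IH: "\<exists>C. circuit E indep C \<and> C \<subseteq> (\<Union>i\<in>I'. h i) - (J - {e})"
    proof -
      have h1: "card (J - {e}) = n" using cJ eJ fJ by simp
      have h2: "finite (J - {e})" using fJ by simp
      have h3: "indep (J - {e})" using m_down[OF m iJ] by blast
      have h4: "finite I'" using fA B1 I'_def by simp
      have "card I' = card A + card B1" unfolding I'_def using fA B1 AB
        by (metis card_Un_disjoint disjoint_iff subset_iff)
      then have h5: "2 ^ n \<le> card I'" using cAB cI B1 by simp
      have h6: "\<forall>i\<in>I'. circuit E indep (h i)" using circ g AB unfolding h_def I'_def by auto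
      have h7: "\<forall>i\<in>I'. \<forall>j\<in>I'. i \<noteq> j \<longrightarrow> h i \<inter> h j \<subseteq> J - {e}"
      proof (intro ballI impI)
        fix i j assume ij: "i \<in> I'" "j \<in> I'" "i \<noteq> j"
        have "h i \<inter> h j \<subseteq> J"
        proof
          fix x assume x: "x \<in> h i \<inter> h j"
          then obtain a b where "a \<in> sp i" "b \<in> sp j" "x \<in> f a" "x \<in> f b"
            using hsp[OF ij(1)] hsp[OF ij(2)] by blast
          moreover have "a \<noteq> b" using spd[OF ij] \<open>a \<in> sp i\<close> \<open>b \<in> sp j\<close> by blast
          moreover have "a \<in> I" using spI[OF ij(1)] \<open>a \<in> sp i\<close> by blast
          moreover have "b \<in> I" using spI[OF ij(2)] \<open>b \<in> sp j\<close> by blast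
          ultimately show "x \<in> J" using dis by blast
        qed
        moreover have "e \<notin> h i" using hsp[OF ij(1)] by simp
        ultimately show "h i \<inter> h j \<subseteq> J - {e}" by blast
      qed
      note inst = Suc.IH[THEN spec[of _ "J - {e}"], THEN spec[of _ I'], THEN spec[of _ h]]
      show ?thesis using mp[OF mp[OF mp[OF mp[OF mp[OF mp[OF mp[OF inst h1] h2] h3] h4] h5] h6] h7] .
    qed
    then obtain C where C: "circuit E indep C" "C \<subseteq> (\<Union>i\<in>I'. h i) - (J - {e})" by blast
    have "(\<Union>i\<in>I'. h i) \<subseteq> (\<Union>i\<in>I. f i) - {e}"
    proof
      fix x assume "x \<in> (\<Union>i\<in>I'. h i)"
      then obtain i where i: "i \<in> I'" "x \<in> h i" by blast
      have "e \<notin> h i" using hsp[OF i(1)] by simp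
      obtain a where "a \<in> sp i" "x \<in> f a" using hsp[OF i(1)] i(2) by blast
      then show "x \<in> (\<Union>i\<in>I. f i) - {e}" using spI[OF i(1)] i(2) \<open>e \<notin> h i\<close> by blast
    qed
    from set_aux[OF C(2) this] C(1) show "\<exists>C. circuit E indep C \<and> C \<subseteq> (\<Union>i\<in>I. f i) - J" by blast
  qed
qed

theorem lemma3p1:
  fixes E :: "'a set" and indep :: "'a set \<Rightarrow> bool"
    and k :: nat and \<C> :: "'a set set" and J :: "'a set"
  assumes "matroid E indep"
    and "\<forall>C\<in>\<C>. circuit E indep C"
    and "J \<subseteq> E" and "card J \<le> k"
    and "\<forall>C\<in>\<C>. \<forall>C'\<in>\<C>. C \<noteq> C' \<longrightarrow> C \<inter> C' = J"
  shows "\<forall>\<D>. \<D> \<subseteq> \<C> \<and> finite \<D> \<and> card \<D> = 2 ^ k \<longrightarrow>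
           (\<exists>C. circuit E indep C \<and> C \<subseteq> \<Union>\<D> - J)"
proof (intro allI impI)
  fix D assume D: "D \<subseteq> \<C> \<and> finite D \<and> card D = 2 ^ k"
  have m: "matroid E indep" using assms(1) .
  have fJ: "finite J" using finite_subset[OF assms(3) m_finite[OF m]] .
  have iJ: "indep J"
  proof (cases "2 \<le> card D")
    case True
    obtain T where T: "T \<subseteq> D" "card T = 2" "finite T"
      by (rule obtain_subset_with_card_n[OF True])
    obtain C1 C2 where c: "T = {C1, C2}" "C1 \<noteq> C2" using T(2) unfolding card_2_iff by blast
    have cin: "C1 \<in> \<C>" "C2 \<in> \<C>" using T(1) D c(1) by auto
    have J: "C1 \<inter> C2 = J" using assms(5) cin c(2) by blast
    have c1: "circuit E indep C1" and c2: "circuit E indep C2" using cin assms(2) by auto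
    have "J \<noteq> C1"
    proof
      assume "J = C1" then have "C1 \<subset> C2" using J c(2) by blast
      then show False using c1 c2 unfolding circuit_def by blast
    qed
    then have "J \<subset> C1" using J by blast
    then show ?thesis using c1 unfolding circuit_def by blast
  next
    case False
    have "k = 0"
    proof (rule ccontr)
      assume "k \<noteq> 0"
      then have "(2::nat) ^ 1 \<le> 2 ^ k" by (intro power_increasing) auto
      then show False using False D by simp
    qed
    then have "J = {}" using assms(4) fJ by simp
    then show ?thesis using m_empty[OF m] by simp
  qed
  have le: "2 ^ card J \<le> card D" using power_increasing[OF assms(4), of "2::nat"] D by simp
  have g6: "\<forall>i\<in>D. circuit E indep (id i)" using D assms(2) by auto
  have g7: "\<forall>i\<in>D. \<forall>j\<in>D. i \<noteq> j \<longrightarrow> id i \<inter> id j \<subseteq> J" using D assms(5) by auto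
  have fD: "finite D" using D by blast
  note inst = main_ind[OF m, of "card J", THEN spec[of _ J], THEN spec[of _ D], THEN spec[of _ id]]
  have "\<exists>C. circuit E indep C \<and> C \<subseteq> (\<Union>i\<in>D. id i) - J"
    using mp[OF mp[OF mp[OF mp[OF mp[OF mp[OF mp[OF inst refl] fJ] iJ] fD] le] g6] g7] .
  then show "\<exists>C. circuit E indep C \<and> C \<subseteq> \<Union>D - J" by simp
qed

end
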